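(* Let $\sigma\ge\tilde\sigma\ge1/4$ and let $\Lambda$ be a finite subset of $\mathbb{Z}^\nu$. Suppose $T(m,n)=D(m,n)+R(m,n)$ for $m,n\in\Lambda$, where $D$ is a diagonal matrix. Suppose further that for each $n\in\Lambda$ there exist numbers $l_n>0$, $0\le\mu_n\le\sigma-\tilde\sigma$, $C_n>0$ and a set $U(n)\subset\Lambda$ with $n\in U(n)$ such that: $T_{U(n)}^{-1}$ exists and $\|T_{U(n)}^{-1}\|_{\tilde\sigma+\mu_n,c}\le C_n$; $\mathrm{dist}(n,\Lambda\setminus U(n))\ge l_n$; and $C_ne^{-\mu_nl_n^c}\|R\|_{\sigma,c}\le\frac12$. Then $T_\Lambda$ is invertible and $\|T_\Lambda^{-1}\|_{\tilde\sigma,c}\le(1+w_{\tilde\sigma,c}(0))C$, where $C:=\sup_{n\in\Lambda}C_n$.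
   Context: $c=0.01$, $|\cdot|$ the maximum norm on $\mathbb{Z}^\nu$ (distances taken in it). $D_N:=\max(D_{\nu,c},D_{\nu,1})$ where $D_{\nu,c}=\sup_{n\in\mathbb{Z}^\nu,\sigma\ge1/4}\sum_m\frac{e^{\sigma|n|^c}}{e^{\sigma|m|^c}e^{\sigma|n-m|^c}}$ and $D_{\nu,1}=\sup_{n,\sigma\ge1/4}\sum_m\frac{(1+|n|)^{\nu+1}e^{\sigma|n|}}{(1+|m|)^{\nu+1}e^{\sigma|m|}(1+|n-m|)^{\nu+1}e^{\sigma|n-m|}}$; $w_{\sigma,c}(n)=D_Ne^{\sigma|n|^c}$. For a matrix $A$ indexed by a subset of $\mathbb{Z}^\nu$ (extended by zero), $\|A\|_{\sigma,c}:=\sup_n\sum_mw_{\sigma,c}(m-n)|A(m,n)|$. For $S\subset\Lambda$, $T_S$ denotes the restriction $(T(m,n))_{m,n\in S}$, and $T_S^{-1}$ its inverse as a matrix on $S$. *)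

theory Defs
  imports "HOL-Analysis.Analysis"
begin

text \<open>Lattice points of Z^nu are modelled as int ^ 'n, with nu = CARD('n).
  Matrices are complex-valued functions of two lattice points.\<close>

definition cexp :: real where "cexp = 0.01"

definition maxnorm :: "int ^ ('n::finite) \<Rightarrow> real" where
  "maxnorm x = Max (range (\<lambda>i. real_of_int \<bar>x $ i\<bar>))"

definition D_nu_c :: "('n::finite) itself \<Rightarrow> real" where
  "D_nu_c _ = Sup {infsum (\<lambda>m::int ^ 'n. exp (\<sigma> * maxnorm n powr cexp) /
        (exp (\<sigma> * maxnorm m powr cexp) * exp (\<sigma> * maxnorm (n - m) powr cexp))) UNIV
      | n \<sigma>. \<sigma> \<ge> 1/4}"

definition D_nu_1 :: "('n::finite) itself \<Rightarrow> real" where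
  "D_nu_1 _ = Sup {infsum (\<lambda>m::int ^ 'n.
        ((1 + maxnorm n) ^ (CARD('n) + 1) * exp (\<sigma> * maxnorm n)) /
        (((1 + maxnorm m) ^ (CARD('n) + 1) * exp (\<sigma> * maxnorm m)) *
         ((1 + maxnorm (n - m)) ^ (CARD('n) + 1) * exp (\<sigma> * maxnorm (n - m))))) UNIV
      | n \<sigma>. \<sigma> \<ge> 1/4}"

definition D_N :: "('n::finite) itself \<Rightarrow> real" where
  "D_N t = max (D_nu_c t) (D_nu_1 t)"

definition wt :: "real \<Rightarrow> int ^ ('n::finite) \<Rightarrow> real" where
  "wt \<sigma> n = D_N TYPE('n) * exp (\<sigma> * maxnorm n powr cexp)"

definition mnorm :: "real \<Rightarrow> (int ^ ('n::finite)) set \<Rightarrow> (int ^ 'n \<Rightarrow> int ^ 'n \<Rightarrow> complex) \<Rightarrow> real" where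
  "mnorm \<sigma> S A = (if S = {} then 0 else
      Max ((\<lambda>n. \<Sum>m\<in>S. wt \<sigma> (m - n) * cmod (A m n)) ` S))"

definition is_inv_on :: "(int ^ ('n::finite)) set \<Rightarrow> (int ^ 'n \<Rightarrow> int ^ 'n \<Rightarrow> complex)
    \<Rightarrow> (int ^ 'n \<Rightarrow> int ^ 'n \<Rightarrow> complex) \<Rightarrow> bool" where
  "is_inv_on S A B \<longleftrightarrow>
     (\<forall>m\<in>S. \<forall>k\<in>S. (\<Sum>j\<in>S. A m j * B j k) = (if m = k then 1 else 0)) \<and>
     (\<forall>m\<in>S. \<forall>k\<in>S. (\<Sum>j\<in>S. B m j * A j k) = (if m = k then 1 else 0))"

end

theory Submission
  imports Defs "Jordan_Normal_Form.Determinant"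
begin

lemma cexp_val: "cexp = 1/100" by (simp add: cexp_def)

lemma mn_ge: "real_of_int \<bar>x $ i\<bar> \<le> maxnorm x"
  unfolding maxnorm_def by (rule Max_ge) auto

lemma mn_nonneg: "0 \<le> maxnorm x"
  using mn_ge[of x undefined] by (meson abs_ge_zero of_int_0_le_iff order_trans)

lemma mn_le: "(\<And>i. real_of_int \<bar>x $ i\<bar> \<le> B) \<Longrightarrow> maxnorm x \<le> B"
  unfolding maxnorm_def by (subst Max_le_iff) auto

lemma mn_zero[simp]: "maxnorm (0::int^'n::finite) = 0"
  by (rule antisym[OF mn_le mn_nonneg]) simp

lemma mn_tri: "maxnorm (x + y) \<le> maxnorm x + maxnorm y"
proof (rule mn_le)
  fix i
  have "real_of_int \<bar>(x + y) $ i\<bar> \<le> real_of_int \<bar>x $ i\<bar> + real_of_int \<bar>y $ i\<bar>" by simp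
  also have "\<dots> \<le> maxnorm x + maxnorm y" using mn_ge[of x i] mn_ge[of y i] by simp
  finally show "real_of_int \<bar>(x + y) $ i\<bar> \<le> maxnorm x + maxnorm y" .
qed

lemma mn_minus: "maxnorm (- x) = maxnorm x"
  unfolding maxnorm_def by simp

lemma mn_sym: "maxnorm (x - y) = maxnorm (y - x)"
  using mn_minus[of "x - y"] by simp

lemma mn_tri3: "maxnorm (m - n) \<le> maxnorm (m - j) + maxnorm (j - n)"
  using mn_tri[of "m - j" "j - n"] by simp

lemma bern_powr:
  fixes x c :: real assumes "0 \<le> x" "0 \<le> c" "c \<le> 1"
  shows "(1 + x) powr c \<le> 1 + c * x"
  using Youngs_inequality_0[of c "1 - c" "1 + x" 1] assms by (simp add: algebra_simps)

lemma powr_split: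
  fixes a b :: real assumes "0 \<le> a" "a \<le> b"
  shows "(a + b) powr cexp \<le> b powr cexp + cexp * a powr cexp"
proof (cases "a = 0")
  case True thus ?thesis by simp
next
  case False
  hence a: "0 < a" using assms by simp
  hence b: "0 < b" using assms by simp
  have "a + b = b * (1 + a / b)" using b by (simp add: field_simps)
  hence "(a + b) powr cexp = (b * (1 + a / b)) powr cexp" by simp
  also have "\<dots> = b powr cexp * (1 + a / b) powr cexp"
    using a b by (simp add: powr_mult)
  also have "\<dots> \<le> b powr cexp * (1 + cexp * (a / b))"
    using a b by (intro mult_left_mono bern_powr) (auto simp: cexp_def)
  also have "\<dots> = b powr cexp + cexp * (a * b powr (cexp - 1))"
    using b by (simp add: powr_diff field_simps)
  also have "a * b powr (cexp - 1) \<le> a * a powr (cexp - 1)"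
    using a assms(2) by (intro mult_left_mono powr_mono2') (auto simp: cexp_def)
  also have "a * a powr (cexp - 1) = a powr cexp"
    using a by (simp add: powr_diff)
  finally show ?thesis by (simp add: cexp_def)
qed

lemma powr_sub_add: "0 \<le> a \<Longrightarrow> 0 \<le> b \<Longrightarrow> (a + b) powr cexp \<le> a powr cexp + b powr cexp"
proof -
  assume a: "0 \<le> a" and b: "0 \<le> b"
  have c: "0 \<le> cexp" "cexp \<le> 1" by (auto simp: cexp_def)
  have p: "0 \<le> a powr cexp" "0 \<le> b powr cexp" by auto
  have "0 \<le> cexp * a powr cexp" "cexp * a powr cexp \<le> a powr cexp"
       "0 \<le> cexp * b powr cexp" "cexp * b powr cexp \<le> b powr cexp"
    using c p by (auto intro: mult_left_le_one_le)
  thus ?thesis using powr_split[of a b] powr_split[of b a] a b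
    by (cases "a \<le> b") (auto simp: add.commute)
qed

lemma powr_min:
  fixes a b :: real assumes "0 \<le> a" "0 \<le> b"
  shows "(a + b) powr cexp - a powr cexp - b powr cexp \<le> - (1 - cexp) * (min a b) powr cexp"
  using powr_split[of a b] powr_split[of b a] assms
  by (cases "a \<le> b") (auto simp: algebra_simps min_def add.commute)

lemma expo_bound:
  fixes n m :: "int^'n::finite"
  shows "maxnorm n powr cexp - maxnorm m powr cexp - maxnorm (n - m) powr cexp
     \<le> - (1 - cexp) * (min (maxnorm m) (maxnorm (n - m))) powr cexp"
proof -
  have "maxnorm n \<le> maxnorm m + maxnorm (n - m)" using mn_tri[of m "n - m"] by simp
  hence "maxnorm n powr cexp \<le> (maxnorm m + maxnorm (n - m)) powr cexp"
    by (intro powr_mono2) (auto simp: cexp_def mn_nonneg)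
  thus ?thesis using powr_min[OF mn_nonneg[of m] mn_nonneg[of "n - m"]] by linarith
qed

lemma exp_pow_fact:
  fixes x :: real assumes "0 \<le> x" shows "x ^ N / fact N \<le> exp x"
proof -
  have sm: "(\<lambda>n. x ^ n / fact n) sums exp x"
    using exp_converges[of x] by (simp add: divide_inverse mult.commute)
  have "sum (\<lambda>n. x ^ n / fact n) {N} \<le> suminf (\<lambda>n. x ^ n / fact n)"
    by (rule sum_le_suminf) (use sm assms in \<open>auto simp: sums_summable\<close>)
  thus ?thesis using sm sums_unique by fastforce
qed

lemma h_bound:
  fixes k x :: real assumes k: "0 < k" and x: "0 < x" and N: "real N * cexp = 2"
  shows "exp (- k * x powr cexp) \<le> (fact N / k ^ N) * inverse (x ^ 2)"
proof -
  have "(k * x powr cexp) ^ N / fact N \<le> exp (k * x powr cexp)"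
    using k x by (intro exp_pow_fact) auto
  moreover have "(k * x powr cexp) ^ N = k ^ N * x ^ 2"
  proof -
    have "(x powr cexp) ^ N = x powr (of_nat N * cexp)"
      using x by (intro powr_power) auto
    also have "\<dots> = x powr 2" using N by simp
    also have "\<dots> = x ^ 2" using x by simp
    finally show ?thesis by (simp add: power_mult_distrib)
  qed
  ultimately have le: "k ^ N * x ^ 2 / fact N \<le> exp (k * x powr cexp)" by simp
  have pos: "0 < k ^ N * x ^ 2 / fact N" using k x by simp
  have "exp (- k * x powr cexp) = inverse (exp (k * x powr cexp))"
    by (simp add: exp_minus)
  also have "\<dots> \<le> inverse (k ^ N * x ^ 2 / fact N)"
    using le pos by (intro le_imp_inverse_le) auto
  also have "\<dots> = (fact N / k ^ N) * inverse (x ^ 2)" by (simp add: field_simps)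
  finally show ?thesis .
qed

lemma nat_summable:
  fixes k :: real assumes k: "0 < k"
  shows "summable (\<lambda>n::nat. exp (- k * real n powr cexp))"
proof -
  obtain N :: nat where N: "real N * cexp = 2" using exI[of "\<lambda>N. real N * cexp = 2" 200]
    by (auto simp: cexp_def)
  show ?thesis
  proof (rule summable_comparison_test')
    show "summable (\<lambda>n::nat. (fact N / k ^ N) * inverse (real n ^ 2))"
      by (intro summable_mult inverse_power_summable) auto
    fix n :: nat assume "1 \<le> n"
    thus "norm (exp (- k * real n powr cexp)) \<le> (fact N / k ^ N) * inverse (real n ^ 2)"
      using h_bound[OF k, of "real n" N] N by simp
  qed
qed

lemma int_sum_bdd:
  fixes k :: real assumes k: "0 < k" and F: "finite F"
  shows "(\<Sum>j\<in>F. exp (- k * real_of_int \<bar>j::int\<bar> powr cexp))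
           \<le> 2 * suminf (\<lambda>n::nat. exp (- k * real n powr cexp))"
proof -
  let ?G = "\<lambda>n::nat. exp (- k * real n powr cexp)"
  let ?g = "\<lambda>j::int. exp (- k * real_of_int \<bar>j\<bar> powr cexp)"
  have sG: "summable ?G" by (rule nat_summable[OF k])
  define F1 where "F1 = {j\<in>F. 0 \<le> j}"
  define F2 where "F2 = {j\<in>F. j < 0}"
  have split: "sum ?g F = sum ?g F1 + sum ?g F2"
    unfolding F1_def F2_def using F by (subst sum.union_disjoint[symmetric]) (auto intro: sum.cong)
  have "sum ?g F1 = sum ?G (nat ` F1)"
  proof -
    have "inj_on nat F1" unfolding F1_def by (auto simp: inj_on_def)
    hence "sum ?G (nat ` F1) = sum (?G \<circ> nat) F1" by (rule sum.reindex)
    also have "\<dots> = sum ?g F1" unfolding F1_def by (intro sum.cong) auto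
    finally show ?thesis by simp
  qed
  also have "\<dots> \<le> suminf ?G" using F sG by (intro sum_le_suminf) (auto simp: F1_def)
  finally have 1: "sum ?g F1 \<le> suminf ?G" .
  have "sum ?g F2 = sum ?G ((\<lambda>j. nat (- j)) ` F2)"
  proof -
    have "inj_on (\<lambda>j. nat (- j)) F2" unfolding F2_def by (auto simp: inj_on_def)
    hence "sum ?G ((\<lambda>j. nat (- j)) ` F2) = sum (?G \<circ> (\<lambda>j. nat (- j))) F2" by (rule sum.reindex)
    also have "\<dots> = sum ?g F2" unfolding F2_def by (intro sum.cong) auto
    finally show ?thesis by simp
  qed
  also have "\<dots> \<le> suminf ?G" using F sG by (intro sum_le_suminf) (auto simp: F2_def)
  finally have 2: "sum ?g F2 \<le> suminf ?G" .
  show ?thesis using split 1 2 by simp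
qed

lemma vec_summable:
  fixes k :: real assumes k: "0 < k"
  shows "(\<lambda>m::int^'n::finite. exp (- k * maxnorm m powr cexp)) summable_on UNIV"
proof (rule nonneg_bdd_above_summable_on)
  show "\<And>x. x \<in> UNIV \<Longrightarrow> 0 \<le> exp (- k * maxnorm x powr cexp)" by simp
  define k' where "k' = k / real CARD('n)"
  have k': "0 < k'" using k by (simp add: k'_def)
  define B where "B = 2 * suminf (\<lambda>n::nat. exp (- k' * real n powr cexp))"
  let ?h = "\<lambda>j::int. exp (- k' * real_of_int \<bar>j\<bar> powr cexp)"
  have Bp: "0 \<le> B" unfolding B_def using nat_summable[OF k'] by (simp add: suminf_nonneg)
  show "bdd_above (sum (\<lambda>m::int^'n. exp (- k * maxnorm m powr cexp)) ` {F. F \<subseteq> UNIV \<and> finite F})"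
  proof (rule bdd_aboveI2)
    fix F :: "(int^'n) set" assume "F \<in> {F. F \<subseteq> UNIV \<and> finite F}"
    hence F: "finite F" by simp
    define P where "P = (\<Union>i. (\<lambda>m. m $ i) ` F)"
    have P: "finite P" unfolding P_def using F by simp
    define Box where "Box = vec_lambda ` (PiE (UNIV::'n set) (\<lambda>_. P))"
    have FB: "F \<subseteq> Box"
    proof
      fix m assume m: "m \<in> F"
      have "vec_nth m \<in> PiE (UNIV::'n set) (\<lambda>_. P)" unfolding P_def using m by auto
      thus "m \<in> Box" unfolding Box_def by (metis image_eqI vec_nth_inverse)
    qed
    have finB: "finite Box" unfolding Box_def using P by (simp add: finite_PiE)
    have pt: "exp (- k * maxnorm m powr cexp) \<le> (\<Prod>i\<in>UNIV. ?h (m $ i))" for m :: "int^'n"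
    proof -
      have "(\<Prod>i\<in>UNIV. ?h (m $ i)) = exp (\<Sum>i\<in>UNIV. - k' * real_of_int \<bar>m $ i\<bar> powr cexp)"
        by (simp add: exp_sum)
      moreover have "(\<Sum>i\<in>UNIV. - k' * real_of_int \<bar>m $ i\<bar> powr cexp) \<ge> (\<Sum>i\<in>(UNIV::'n set). - k' * maxnorm m powr cexp)"
        using k' by (intro sum_mono mult_left_mono_neg powr_mono2) (use mn_ge[of m] in \<open>auto simp: cexp_def\<close>)
      moreover have "(\<Sum>i\<in>(UNIV::'n set). - k' * maxnorm m powr cexp) = - k * maxnorm m powr cexp"
      proof -
        have ck: "real CARD('n) * k' = k" by (simp add: k'_def)
        have "(\<Sum>i\<in>(UNIV::'n set). - k' * maxnorm m powr cexp) = - (real CARD('n) * k') * maxnorm m powr cexp"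
          by simp
        thus ?thesis using ck by simp
      qed
      ultimately show ?thesis by (metis exp_le_cancel_iff order_trans)
    qed
    have "sum (\<lambda>m. exp (- k * maxnorm m powr cexp)) F \<le> sum (\<lambda>m. \<Prod>i\<in>UNIV. ?h (m $ i)) F"
      by (rule sum_mono) (rule pt)
    also have "\<dots> \<le> sum (\<lambda>m. \<Prod>i\<in>UNIV. ?h (m $ i)) Box"
      by (rule sum_mono2[OF finB FB]) (simp add: prod_nonneg)
    also have "\<dots> = sum (\<lambda>g. \<Prod>i\<in>UNIV. ?h (g i)) (PiE (UNIV::'n set) (\<lambda>_. P))"
    proof -
      have inj: "inj_on vec_lambda (PiE (UNIV::'n set) (\<lambda>_. P))"
        by (rule inj_onI) (metis vec_lambda_inverse UNIV_I)
      show ?thesis unfolding Box_def using sum.reindex[OF inj, of "\<lambda>m::int^'n. \<Prod>i\<in>UNIV. ?h (m $ i)"]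
        by simp
    qed
    also have "\<dots> = (\<Prod>i\<in>(UNIV::'n set). sum ?h P)"
      by (rule prod_sum_PiE[symmetric]) (use P in simp_all)
    also have "\<dots> \<le> (\<Prod>i\<in>(UNIV::'n set). B)"
    proof (rule prod_mono)
      fix i :: 'n
      show "0 \<le> sum ?h P \<and> sum ?h P \<le> B"
        using int_sum_bdd[OF k' P] by (simp add: B_def sum_nonneg)
    qed
    finally show "sum (\<lambda>m. exp (- k * maxnorm m powr cexp)) F \<le> (\<Prod>i\<in>(UNIV::'n set). B)" .
  qed
qed


definition Gk :: "int^'n::finite \<Rightarrow> real" where
  "Gk m = exp (- ((1 - cexp) / 4) * maxnorm m powr cexp)"

lemma Gk_summable: "Gk summable_on UNIV"
  unfolding Gk_def by (rule vec_summable) (simp add: cexp_def)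

lemma Gk_nonneg: "0 \<le> Gk m" by (simp add: Gk_def)

lemma exp3: "exp (x::real) / (exp y * exp z) = exp (x - y - z)"
  by (simp add: exp_diff)

lemma f_bound:
  fixes n m :: "int^'n::finite" assumes s: "1/4 \<le> \<sigma>"
  shows "exp (\<sigma> * maxnorm n powr cexp) /
        (exp (\<sigma> * maxnorm m powr cexp) * exp (\<sigma> * maxnorm (n - m) powr cexp)) \<le> Gk m + Gk (n - m)"
proof -
  define a where "a = maxnorm n powr cexp"
  define b where "b = maxnorm m powr cexp"
  define d where "d = maxnorm (n - m) powr cexp"
  define mn where "mn = min (maxnorm m) (maxnorm (n - m)) powr cexp"
  have e: "exp (\<sigma> * a) / (exp (\<sigma> * b) * exp (\<sigma> * d)) = exp (\<sigma> * (a - b - d))"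
    unfolding exp3 by (simp add: right_diff_distrib)
  have eb: "a - b - d \<le> - (1 - cexp) * mn" unfolding a_def b_def d_def mn_def by (rule expo_bound)
  have mnn: "0 \<le> mn" unfolding mn_def by simp
  have c1: "0 \<le> 1 - cexp" by (simp add: cexp_def)
  have "0 \<le> (1 - cexp) * mn" using c1 mnn by (rule mult_nonneg_nonneg)
  hence neg: "a - b - d \<le> 0" using eb by linarith
  have "\<sigma> * (a - b - d) \<le> 1/4 * (a - b - d)" by (rule mult_right_mono_neg[OF s neg])
  also have "\<dots> \<le> 1/4 * (- (1 - cexp) * mn)" using eb by (rule mult_left_mono) simp
  also have "1/4 * (- (1 - cexp) * mn) = - ((1 - cexp) / 4) * mn" by (simp add: field_simps)
  finally have "exp (\<sigma> * (a - b - d)) \<le> exp (- ((1 - cexp) / 4) * mn)" by simp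
  also have "\<dots> \<le> Gk m + Gk (n - m)"
  proof (cases "maxnorm m \<le> maxnorm (n - m)")
    case True
    hence "mn = maxnorm m powr cexp" unfolding mn_def by simp
    thus ?thesis using Gk_nonneg[of "n - m"] unfolding Gk_def by simp
  next
    case False
    hence "mn = maxnorm (n - m) powr cexp" unfolding mn_def by simp
    thus ?thesis using Gk_nonneg[of m] unfolding Gk_def by simp
  qed
  finally show ?thesis using e unfolding a_def b_def d_def by simp
qed

lemma Gk_finite_le:
  fixes F :: "(int^'n::finite) set"
  assumes F: "finite F" shows "sum Gk F \<le> infsum Gk (UNIV::(int^'n) set)"
proof -
  have "infsum Gk F \<le> infsum Gk (UNIV::(int^'n) set)"
    by (rule infsum_mono_neutral[OF summable_on_finite[OF F] Gk_summable]) (auto simp: Gk_nonneg)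
  thus ?thesis using F by simp
qed

lemma Dc_ge1: "1 \<le> D_nu_c TYPE('n::finite)"
proof -
  define S where "S = {infsum (\<lambda>m::int ^ 'n. exp (\<sigma> * maxnorm n powr cexp) /
        (exp (\<sigma> * maxnorm m powr cexp) * exp (\<sigma> * maxnorm (n - m) powr cexp))) UNIV
      | n \<sigma>. \<sigma> \<ge> 1/4}"
  have D: "D_nu_c TYPE('n) = Sup S" unfolding D_nu_c_def S_def by simp
  define Gs where "Gs = infsum Gk (UNIV::(int^'n) set)"
  have Gs0: "0 \<le> Gs" unfolding Gs_def by (rule infsum_nonneg) (simp add: Gk_nonneg)
  have bd: "x \<le> 2 * Gs" if "x \<in> S" for x
  proof -
    obtain n :: "int^'n" and \<sigma> :: real where s: "1/4 \<le> \<sigma>" and x: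
      "x = infsum (\<lambda>m::int ^ 'n. exp (\<sigma> * maxnorm n powr cexp) /
        (exp (\<sigma> * maxnorm m powr cexp) * exp (\<sigma> * maxnorm (n - m) powr cexp))) UNIV"
      using \<open>x \<in> S\<close> unfolding S_def by blast
    let ?f = "\<lambda>m::int ^ 'n. exp (\<sigma> * maxnorm n powr cexp) /
        (exp (\<sigma> * maxnorm m powr cexp) * exp (\<sigma> * maxnorm (n - m) powr cexp))"
    show ?thesis
    proof (cases "?f summable_on UNIV")
      case False thus ?thesis using x Gs0 by (simp add: infsum_not_exists)
    next
      case True
      have "infsum ?f UNIV \<le> Gs + Gs"
      proof (rule infsum_le_finite_sums[OF True])
        fix F :: "(int^'n) set" assume F: "finite F" "F \<subseteq> UNIV"
        have "sum ?f F \<le> sum (\<lambda>m. Gk m + Gk (n - m)) F"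
          by (rule sum_mono) (rule f_bound[OF s])
        also have "\<dots> = sum Gk F + sum (\<lambda>m. Gk (n - m)) F" by (simp add: sum.distrib)
        also have "sum (\<lambda>m. Gk (n - m)) F = sum Gk ((\<lambda>m. n - m) ` F)"
        proof -
          have "inj_on (\<lambda>m. n - m) F" by (auto simp: inj_on_def)
          thus ?thesis by (simp add: sum.reindex)
        qed
        also have "sum Gk F + sum Gk ((\<lambda>m. n - m) ` F) \<le> Gs + Gs"
          unfolding Gs_def using F by (intro add_mono Gk_finite_le) auto
        finally show "sum ?f F \<le> Gs + Gs" .
      qed
      thus ?thesis using x by simp
    qed
  qed
  have bdd: "bdd_above S" using bd by (intro bdd_aboveI) blast
  let ?f0 = "\<lambda>m::int ^ 'n. exp (1/4 * maxnorm (0::int^'n) powr cexp) /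
        (exp (1/4 * maxnorm m powr cexp) * exp (1/4 * maxnorm (0 - m) powr cexp))"
  have inS: "infsum ?f0 UNIV \<in> S" unfolding S_def by blast
  have f0sum: "?f0 summable_on UNIV"
  proof (rule summable_on_comparison_test)
    show "(\<lambda>m. Gk m + Gk (0 - m)) summable_on UNIV"
    proof (rule summable_on_add[OF Gk_summable])
      have eq: "(\<lambda>m. Gk (0 - m)) = Gk" by (simp add: fun_eq_iff Gk_def mn_minus)
      show "(\<lambda>m. Gk (0 - m)) summable_on UNIV" by (subst eq) (rule Gk_summable)
    qed
    show "\<And>x. x \<in> UNIV \<Longrightarrow> ?f0 x \<le> Gk x + Gk (0 - x)" by (rule f_bound) simp
    show "\<And>x. x \<in> UNIV \<Longrightarrow> 0 \<le> ?f0 x" by simp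
  qed
  have "infsum ?f0 {0} \<le> infsum ?f0 UNIV"
    by (rule infsum_mono_neutral) (use f0sum in auto)
  moreover have "infsum ?f0 {0} = 1" by (simp add: cexp_def)
  ultimately have "1 \<le> infsum ?f0 UNIV" by simp
  also have "\<dots> \<le> Sup S" by (rule cSup_upper[OF inS bdd])
  finally show ?thesis using D by simp
qed

lemma DN_ge1: "1 \<le> D_N TYPE('n::finite)"
  unfolding D_N_def using Dc_ge1[where 'n='n] by simp

lemma wt_ge1: "0 \<le> \<sigma> \<Longrightarrow> 1 \<le> wt \<sigma> (x::int^'n::finite)"
proof -
  assume s: "0 \<le> \<sigma>"
  have "1 \<le> exp (\<sigma> * maxnorm x powr cexp)" using s by simp
  thus ?thesis unfolding wt_def using DN_ge1[where 'n='n]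
    by (metis mult_mono' mult_1_left zero_le_one)
qed

lemma LA_mult_entry:
  assumes e: "bij_betw e {..<N} S" and i: "i < N" and j: "j < N"
  shows "(mat N N (\<lambda>(i,j). X (e i) (e j)) * mat N N (\<lambda>(i,j). Y (e i) (e j))) $$ (i,j)
     = (\<Sum>s\<in>S. X (e i) s * Y s (e j))"
proof -
  have "(mat N N (\<lambda>(i,j). X (e i) (e j)) * mat N N (\<lambda>(i,j). Y (e i) (e j))) $$ (i,j)
      = (\<Sum>k\<in>{0..<N}. X (e i) (e k) * Y (e k) (e j))"
    using i j by (simp add: scalar_prod_def)
  also have "\<dots> = (\<Sum>k\<in>{..<N}. X (e i) (e k) * Y (e k) (e j))"
    by (simp add: atLeast0LessThan)
  also have "\<dots> = (\<Sum>s\<in>S. X (e i) s * Y s (e j))"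
    using sum.reindex_bij_betw[OF e, of "\<lambda>s. X (e i) s * Y s (e j)"] by simp
  finally show ?thesis .
qed

lemma LA_right_left:
  fixes X Y :: "'a \<Rightarrow> 'a \<Rightarrow> 'b::field"
  assumes fin: "finite S"
    and h: "\<forall>m\<in>S. \<forall>k\<in>S. (\<Sum>j\<in>S. X m j * Y j k) = (if m = k then 1 else 0)"
  shows "\<forall>m\<in>S. \<forall>k\<in>S. (\<Sum>j\<in>S. Y m j * X j k) = (if m = k then 1 else 0)"
proof -
  define N where "N = card S"
  obtain e where e: "bij_betw e {..<N} S"
    using bij_betw_from_nat_into_finite[OF fin] N_def by blast
  define XM where "XM = mat N N (\<lambda>(i,j). X (e i) (e j))"
  define YM where "YM = mat N N (\<lambda>(i,j). Y (e i) (e j))"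
  have inj: "inj_on e {..<N}" using e bij_betw_def by blast
  have XY: "XM * YM = 1\<^sub>m N"
  proof (rule eq_matI)
    fix i j assume i: "i < dim_row (1\<^sub>m N)" and j: "j < dim_col (1\<^sub>m N)"
    hence i': "i < N" and j': "j < N" by auto
    have ei: "e i \<in> S" and ej: "e j \<in> S" using e i' j' bij_betw_apply by fastforce+
    have "(XM * YM) $$ (i,j) = (\<Sum>s\<in>S. X (e i) s * Y s (e j))"
      unfolding XM_def YM_def by (rule LA_mult_entry[OF e i' j'])
    also have "\<dots> = (if e i = e j then 1 else 0)" using h ei ej by blast
    also have "\<dots> = (if i = j then 1 else 0)" using inj i' j' inj_on_eq_iff[OF inj] by auto
    finally show "(XM * YM) $$ (i,j) = 1\<^sub>m N $$ (i,j)" using i' j' by simp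
  qed (auto simp: XM_def YM_def)
  have YX: "YM * XM = 1\<^sub>m N"
    by (rule mat_mult_left_right_inverse[OF _ _ XY]) (auto simp: XM_def YM_def)
  show ?thesis
  proof (intro ballI)
    fix m k assume m: "m \<in> S" and k: "k \<in> S"
    obtain i where i: "i < N" "e i = m" using e m by (metis bij_betw_iff_bijections lessThan_iff)
    obtain j where j: "j < N" "e j = k" using e k by (metis bij_betw_iff_bijections lessThan_iff)
    have "(YM * XM) $$ (i,j) = (\<Sum>s\<in>S. Y (e i) s * X s (e j))"
      unfolding XM_def YM_def by (rule LA_mult_entry[OF e i(1) j(1)])
    hence "(\<Sum>s\<in>S. Y m s * X s k) = (YM * XM) $$ (i,j)" using i j by simp
    also have "\<dots> = (if i = j then 1 else 0)" using YX i j by simp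
    also have "\<dots> = (if m = k then 1 else 0)" using i j inj_on_eq_iff[OF inj] by auto
    finally show "(\<Sum>j\<in>S. Y m j * X j k) = (if m = k then 1 else 0)" .
  qed
qed

lemma LA_inj_inv:
  fixes X :: "'a \<Rightarrow> 'a \<Rightarrow> 'b::field"
  assumes fin: "finite S"
    and inj0: "\<And>v. (\<forall>m\<in>S. (\<Sum>j\<in>S. X m j * v j) = 0) \<Longrightarrow> (\<forall>j\<in>S. v j = 0)"
  shows "\<exists>Y. \<forall>m\<in>S. \<forall>k\<in>S. (\<Sum>j\<in>S. X m j * Y j k) = (if m = k then 1 else 0)"
proof -
  define N where "N = card S"
  obtain e where e: "bij_betw e {..<N} S"
    using bij_betw_from_nat_into_finite[OF fin] N_def by blast
  define ei where "ei = inv_into {..<N} e"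
  have inj: "inj_on e {..<N}" using e bij_betw_def by blast
  have eei: "\<And>s. s \<in> S \<Longrightarrow> e (ei s) = s" "\<And>s. s \<in> S \<Longrightarrow> ei s < N"
    unfolding ei_def using e by (auto simp: bij_betw_def f_inv_into_f inv_into_into)
  define XM where "XM = mat N N (\<lambda>(i,j). X (e i) (e j))"
  have XMc: "XM \<in> carrier_mat N N" by (simp add: XM_def)
  have "det XM \<noteq> 0"
  proof
    assume "det XM = 0"
    then obtain v where v: "v \<in> carrier_vec N" "v \<noteq> 0\<^sub>v N" "XM *\<^sub>v v = 0\<^sub>v N"
      using det_0_iff_vec_prod_zero_field[OF XMc] by blast
    define w where "w s = v $ (ei s)" for s
    have "\<forall>m\<in>S. (\<Sum>j\<in>S. X m j * w j) = 0"
    proof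
      fix m assume m: "m \<in> S"
      have "(XM *\<^sub>v v) $ (ei m) = 0" using v(3) eei(2)[OF m] by simp
      moreover have "(XM *\<^sub>v v) $ (ei m) = (\<Sum>k\<in>{0..<N}. X m (e k) * v $ k)"
        using eei[OF m] v(1) by (simp add: XM_def scalar_prod_def)
      moreover have "(\<Sum>k\<in>{0..<N}. X m (e k) * v $ k) = (\<Sum>k\<in>{..<N}. X m (e k) * w (e k))"
        unfolding w_def using inj by (intro sum.cong) (auto simp: atLeast0LessThan ei_def)
      moreover have "\<dots> = (\<Sum>j\<in>S. X m j * w j)"
        using sum.reindex_bij_betw[OF e, of "\<lambda>s. X m s * w s"] by simp
      ultimately show "(\<Sum>j\<in>S. X m j * w j) = 0" by simp
    qed
    hence w0: "\<forall>j\<in>S. w j = 0" by (rule inj0)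
    have "v = 0\<^sub>v N"
    proof (rule eq_vecI)
      fix k assume "k < dim_vec (0\<^sub>v N)"
      hence k: "k < N" by simp
      have "e k \<in> S" using e k bij_betw_apply by fastforce
      hence "w (e k) = 0" using w0 by blast
      moreover have "ei (e k) = k" unfolding ei_def using inj k by simp
      ultimately show "v $ k = 0\<^sub>v N $ k" using k unfolding w_def by simp
    qed (use v(1) in simp)
    with v(2) show False by simp
  qed
  from det_non_zero_imp_unit[OF XMc this, of "()"]
  obtain YM where YM: "YM \<in> carrier_mat N N" "YM * XM = 1\<^sub>m N"
    unfolding Units_def ring_mat_def by auto
  have XY: "XM * YM = 1\<^sub>m N" by (rule mat_mult_left_right_inverse[OF YM(1) XMc YM(2)])
  define Y where "Y s t = YM $$ (ei s, ei t)" for s t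
  have YMeq: "YM = mat N N (\<lambda>(i,j). Y (e i) (e j))"
    using YM(1) inj by (intro eq_matI) (auto simp: Y_def ei_def)
  show ?thesis
  proof (intro exI ballI)
    fix m k assume m: "m \<in> S" and k: "k \<in> S"
    have "(XM * YM) $$ (ei m, ei k) = (\<Sum>s\<in>S. X (e (ei m)) s * Y s (e (ei k)))"
      unfolding XM_def YMeq by (rule LA_mult_entry[OF e eei(2)[OF m] eei(2)[OF k]])
    hence "(\<Sum>j\<in>S. X m j * Y j k) = (XM * YM) $$ (ei m, ei k)" using eei[OF m] eei[OF k] by simp
    also have "\<dots> = (if ei m = ei k then 1 else 0)" using XY eei(2)[OF m] eei(2)[OF k] by simp
    also have "\<dots> = (if m = k then 1 else 0)" using eei m k by metis
    finally show "(\<Sum>j\<in>S. X m j * Y j k) = (if m = k then 1 else 0)" .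
  qed
qed

definition colsum :: "real \<Rightarrow> (int^'n::finite) set \<Rightarrow> (int^'n \<Rightarrow> int^'n \<Rightarrow> complex) \<Rightarrow> int^'n \<Rightarrow> real" where
  "colsum \<sigma> S A n = (\<Sum>m\<in>S. wt \<sigma> (m - n) * cmod (A m n))"

lemma mnorm_ge: "finite S \<Longrightarrow> n \<in> S \<Longrightarrow> colsum \<sigma> S A n \<le> mnorm \<sigma> S A"
  unfolding mnorm_def colsum_def by (auto intro: Max_ge)

lemma mnorm_le: "finite S \<Longrightarrow> S \<noteq> {} \<Longrightarrow> (\<And>n. n \<in> S \<Longrightarrow> colsum \<sigma> S A n \<le> B) \<Longrightarrow> mnorm \<sigma> S A \<le> B"
  unfolding mnorm_def colsum_def by (simp add: Max_le_iff)

lemma wt_nonneg: "0 \<le> \<sigma> \<Longrightarrow> 0 \<le> wt \<sigma> x"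
  using wt_ge1[of \<sigma> x] by simp

lemma colsum_nonneg: "0 \<le> \<sigma> \<Longrightarrow> 0 \<le> colsum \<sigma> S A n"
  unfolding colsum_def by (intro sum_nonneg mult_nonneg_nonneg wt_nonneg) auto

lemma mnorm_nonneg: "finite S \<Longrightarrow> 0 \<le> \<sigma> \<Longrightarrow> 0 \<le> mnorm \<sigma> S A"
proof (cases "S = {}")
  case True thus ?thesis by (simp add: mnorm_def)
next
  case False
  assume "finite S" "0 \<le> \<sigma>"
  then obtain n where "n \<in> S" using False by blast
  thus ?thesis using mnorm_ge[OF \<open>finite S\<close> \<open>n \<in> S\<close>, of \<sigma> A] colsum_nonneg[OF \<open>0 \<le> \<sigma>\<close>] by (meson order_trans)
qed

lemma wt_mono: "s \<le> t \<Longrightarrow> wt s (x::int^'n::finite) \<le> wt t x"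
  unfolding wt_def using DN_ge1[where 'n='n]
  by (intro mult_left_mono) (auto intro: mult_right_mono)

lemma wt_sub:
  assumes s: "0 \<le> s" and st: "s \<le> t"
  shows "wt s (m - n) \<le> wt t (m - j) * wt s (j - (n::int^'n::finite))"
proof -
  let ?D = "D_N TYPE('n)"
  have D1: "1 \<le> ?D" by (rule DN_ge1)
  have "maxnorm (m - n) powr cexp \<le> (maxnorm (m - j) + maxnorm (j - n)) powr cexp"
    by (intro powr_mono2 mn_tri3) (auto simp: cexp_def mn_nonneg)
  also have "\<dots> \<le> maxnorm (m - j) powr cexp + maxnorm (j - n) powr cexp"
    by (intro powr_sub_add mn_nonneg)
  finally have p: "maxnorm (m - n) powr cexp \<le> maxnorm (m - j) powr cexp + maxnorm (j - n) powr cexp" .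
  have "s * maxnorm (m - n) powr cexp \<le> s * maxnorm (m - j) powr cexp + s * maxnorm (j - n) powr cexp"
    using mult_left_mono[OF p s] by (simp add: algebra_simps)
  also have "\<dots> \<le> t * maxnorm (m - j) powr cexp + s * maxnorm (j - n) powr cexp"
    using st by (intro add_right_mono mult_right_mono) auto
  finally have e: "exp (s * maxnorm (m - n) powr cexp) \<le> exp (t * maxnorm (m - j) powr cexp) * exp (s * maxnorm (j - n) powr cexp)"
    by (simp add: exp_add[symmetric])
  have "wt s (m - n) = ?D * exp (s * maxnorm (m - n) powr cexp)" by (simp add: wt_def)
  also have "\<dots> \<le> ?D * (exp (t * maxnorm (m - j) powr cexp) * exp (s * maxnorm (j - n) powr cexp))"
    using e D1 by (intro mult_left_mono) auto
  also have "\<dots> \<le> ?D * ?D * (exp (t * maxnorm (m - j) powr cexp) * exp (s * maxnorm (j - n) powr cexp))"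
    using D1 by (intro mult_right_mono) auto
  also have "\<dots> = wt t (m - j) * wt s (j - n)" by (simp add: wt_def algebra_simps)
  finally show ?thesis .
qed

lemma mnorm_mult:
  fixes X Y :: "int^'n::finite \<Rightarrow> int^'n \<Rightarrow> complex"
  assumes S: "finite S" and s: "0 \<le> s" and st: "s \<le> t"
  shows "mnorm s S (\<lambda>m n. \<Sum>j\<in>S. X m j * Y j n) \<le> mnorm t S X * mnorm s S Y"
proof (cases "S = {}")
  case True thus ?thesis by (simp add: mnorm_def)
next
  case False
  have t: "0 \<le> t" using s st by linarith
  show ?thesis
  proof (rule mnorm_le[OF S False])
    fix n assume n: "n \<in> S"
    have "colsum s S (\<lambda>m n. \<Sum>j\<in>S. X m j * Y j n) n
        \<le> (\<Sum>m\<in>S. \<Sum>j\<in>S. wt t (m - j) * wt s (j - n) * (cmod (X m j) * cmod (Y j n)))"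
      unfolding colsum_def
    proof (rule sum_mono)
      fix m assume m: "m \<in> S"
      have "wt s (m - n) * cmod (\<Sum>j\<in>S. X m j * Y j n) \<le> wt s (m - n) * (\<Sum>j\<in>S. cmod (X m j) * cmod (Y j n))"
        using wt_nonneg[OF s] by (intro mult_left_mono) (auto intro: order_trans[OF norm_sum] simp: norm_mult)
      also have "\<dots> = (\<Sum>j\<in>S. wt s (m - n) * (cmod (X m j) * cmod (Y j n)))" by (simp add: sum_distrib_left)
      also have "\<dots> \<le> (\<Sum>j\<in>S. wt t (m - j) * wt s (j - n) * (cmod (X m j) * cmod (Y j n)))"
        by (intro sum_mono mult_right_mono wt_sub[OF s st]) auto
      finally show "wt s (m - n) * cmod (\<Sum>j\<in>S. X m j * Y j n) \<le> (\<Sum>j\<in>S. wt t (m - j) * wt s (j - n) * (cmod (X m j) * cmod (Y j n)))" .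
    qed
    also have "\<dots> = (\<Sum>j\<in>S. wt s (j - n) * cmod (Y j n) * colsum t S X j)"
      unfolding colsum_def by (subst sum.swap) (simp add: sum_distrib_left sum_distrib_right algebra_simps)
    also have "\<dots> \<le> (\<Sum>j\<in>S. wt s (j - n) * cmod (Y j n) * mnorm t S X)"
      using S wt_nonneg[OF s] by (intro sum_mono mult_left_mono mnorm_ge mult_nonneg_nonneg) auto
    also have "\<dots> = colsum s S Y n * mnorm t S X" unfolding colsum_def by (simp add: sum_distrib_right)
    also have "\<dots> \<le> mnorm s S Y * mnorm t S X"
      using mnorm_ge[OF S n] mnorm_nonneg[OF S t] by (intro mult_right_mono) auto
    finally show "colsum s S (\<lambda>m n. \<Sum>j\<in>S. X m j * Y j n) n \<le> mnorm t S X * mnorm s S Y"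
      by (simp add: mult.commute)
  qed
qed

lemma mnorm_add:
  assumes S: "finite S" and s: "0 \<le> s"
  shows "mnorm s S (\<lambda>m n. X m n + Y m n) \<le> mnorm s S X + mnorm s S Y"
proof (cases "S = {}")
  case True thus ?thesis by (simp add: mnorm_def)
next
  case False
  show ?thesis
  proof (rule mnorm_le[OF S False])
    fix n assume n: "n \<in> S"
    have "colsum s S (\<lambda>m n. X m n + Y m n) n \<le> colsum s S X n + colsum s S Y n"
      unfolding colsum_def sum.distrib[symmetric]
    proof (rule sum_mono)
      fix m assume "m \<in> S"
      have "wt s (m - n) * cmod (X m n + Y m n) \<le> wt s (m - n) * (cmod (X m n) + cmod (Y m n))"
        by (rule mult_left_mono[OF norm_triangle_ineq wt_nonneg[OF s]])
      thus "wt s (m - n) * cmod (X m n + Y m n) \<le> wt s (m - n) * cmod (X m n) + wt s (m - n) * cmod (Y m n)"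
        by (simp add: distrib_left)
    qed
    also have "\<dots> \<le> mnorm s S X + mnorm s S Y" using mnorm_ge[OF S n] by (intro add_mono)
    finally show "colsum s S (\<lambda>m n. X m n + Y m n) n \<le> mnorm s S X + mnorm s S Y" .
  qed
qed

lemma mnorm_uminus: "mnorm s S (\<lambda>m n. - X m n) = mnorm s S X"
  unfolding mnorm_def by simp

lemma mnorm_id:
  fixes S :: "(int^'n::finite) set"
  shows "finite S \<Longrightarrow> mnorm s S (\<lambda>m n. if m = n then 1 else 0) \<le> wt s (0::int^'n)"
proof (cases "S = {}")
  case True assume "finite S" thus ?thesis using True wt_ge1[of 0 0]
    by (simp add: mnorm_def wt_def) (smt (verit) DN_ge1 exp_ge_zero mult_nonneg_nonneg)
next
  case False assume S: "finite S"
  show ?thesis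
  proof (rule mnorm_le[OF S False])
    fix n assume n: "n \<in> S"
    have "colsum s S (\<lambda>m n. if m = n then 1 else 0) n = (\<Sum>m\<in>S. if m = n then wt s (m - n) else 0)"
      unfolding colsum_def by (intro sum.cong) auto
    also have "\<dots> = wt s (0::int^'n)" using S n by (simp add: sum.delta)
    finally show "colsum s S (\<lambda>m n. if m = n then 1 else (0::complex)) n \<le> wt s (0::int^'n)" by simp
  qed
qed

lemma mnorm_cong:
  assumes "\<forall>m\<in>S. \<forall>n\<in>S. X m n = Y m n"
  shows "mnorm s S X = mnorm s S Y"
proof -
  have "(\<lambda>n. \<Sum>m\<in>S. wt s (m - n) * cmod (X m n)) ` S = (\<lambda>n. \<Sum>m\<in>S. wt s (m - n) * cmod (Y m n)) ` S"
    using assms by (intro image_cong refl sum.cong) auto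
  thus ?thesis unfolding mnorm_def by simp
qed

lemma sum_restrict_sub:
  assumes "finite L" "U \<subseteq> L"
  shows "(\<Sum>j\<in>L. if j \<in> U then f j else 0) = (\<Sum>j\<in>U. f j)"
proof -
  have "(\<Sum>j\<in>L. if j \<in> U then f j else 0) = (\<Sum>j\<in>{j\<in>L. j \<in> U}. f j)"
    using assms(1) by (simp add: sum.inter_filter)
  also have "{j\<in>L. j \<in> U} = U" using assms(2) by auto
  finally show ?thesis .
qed

theorem lemma15:
  fixes \<Lambda> :: "(int ^ 'n) set"
    and T D R :: "int ^ 'n \<Rightarrow> int ^ 'n \<Rightarrow> complex"
    and \<sigma> \<sigma>' :: real
    and l \<mu> Cn :: "int ^ 'n \<Rightarrow> real"
    and U :: "int ^ 'n \<Rightarrow> (int ^ 'n) set"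
  assumes "\<sigma> \<ge> \<sigma>'" and "\<sigma>' \<ge> 1/4"
    and "finite \<Lambda>"
    and "\<forall>m\<in>\<Lambda>. \<forall>n\<in>\<Lambda>. T m n = D m n + R m n"
    and "\<forall>m\<in>\<Lambda>. \<forall>n\<in>\<Lambda>. m \<noteq> n \<longrightarrow> D m n = 0"
    and "\<forall>n\<in>\<Lambda>. l n > 0 \<and> 0 \<le> \<mu> n \<and> \<mu> n \<le> \<sigma> - \<sigma>' \<and> Cn n > 0"
    and "\<forall>n\<in>\<Lambda>. U n \<subseteq> \<Lambda> \<and> n \<in> U n"
    and "\<forall>n\<in>\<Lambda>. \<exists>B. is_inv_on (U n) T B \<and> mnorm (\<sigma>' + \<mu> n) (U n) B \<le> Cn n"
    and "\<forall>n\<in>\<Lambda>. \<forall>m\<in>\<Lambda> - U n. maxnorm (n - m) \<ge> l n"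
    and "\<forall>n\<in>\<Lambda>. Cn n * exp (- \<mu> n * l n powr cexp) * mnorm \<sigma> \<Lambda> R \<le> 1/2"
  shows "\<exists>B. is_inv_on \<Lambda> T B \<and>
           mnorm \<sigma>' \<Lambda> B \<le> (1 + wt \<sigma>' (0 :: int ^ 'n)) *
             (if \<Lambda> = {} then 0 else Max (Cn ` \<Lambda>))"
proof (cases "\<Lambda> = {}")
  case True
  show ?thesis by (rule exI[of _ "\<lambda>m n. 0"]) (simp add: True is_inv_on_def mnorm_def)
next
  case False
  have fin: "finite \<Lambda>" by (rule assms(3))
  have s'0: "0 \<le> \<sigma>'" using assms(2) by linarith
  have s0: "0 \<le> \<sigma>" using assms(1,2) by linarith
  have par: "\<And>n. n \<in> \<Lambda> \<Longrightarrow> l n > 0 \<and> 0 \<le> \<mu> n \<and> \<mu> n \<le> \<sigma> - \<sigma>' \<and> Cn n > 0"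
    using assms(6) by blast
  have Usub: "\<And>n. n \<in> \<Lambda> \<Longrightarrow> U n \<subseteq> \<Lambda>" and nU: "\<And>n. n \<in> \<Lambda> \<Longrightarrow> n \<in> U n"
    using assms(7) by blast+
  have finU: "\<And>n. n \<in> \<Lambda> \<Longrightarrow> finite (U n)" using Usub fin finite_subset by blast
  obtain G where G: "\<forall>n\<in>\<Lambda>. is_inv_on (U n) T (G n) \<and> mnorm (\<sigma>' + \<mu> n) (U n) (G n) \<le> Cn n"
    using bchoice[OF assms(8)] by blast
  define A where "A m n = (if m \<in> U n then G n m n else 0)" for m n
  define K where "K m n = (if m \<in> U n then 0 else (\<Sum>j\<in>U n. R m j * G n j n))" for m n
  define Iden :: "int^'n \<Rightarrow> int^'n \<Rightarrow> complex" where "Iden m n = (if m = n then 1 else 0)" for m n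
  define Cmax where "Cmax = Max (Cn ` \<Lambda>)"
  have CnC: "\<And>n. n \<in> \<Lambda> \<Longrightarrow> Cn n \<le> Cmax" unfolding Cmax_def using fin by auto
  have TA: "\<forall>m\<in>\<Lambda>. \<forall>n\<in>\<Lambda>. (\<Sum>j\<in>\<Lambda>. T m j * A j n) = Iden m n + K m n"
  proof (intro ballI)
    fix m n assume m: "m \<in> \<Lambda>" and n: "n \<in> \<Lambda>"
    have "(\<Sum>j\<in>\<Lambda>. T m j * A j n) = (\<Sum>j\<in>\<Lambda>. if j \<in> U n then T m j * G n j n else 0)"
      by (intro sum.cong) (auto simp: A_def)
    also have "\<dots> = (\<Sum>j\<in>U n. T m j * G n j n)" by (rule sum_restrict_sub[OF fin Usub[OF n]])
    finally have e: "(\<Sum>j\<in>\<Lambda>. T m j * A j n) = (\<Sum>j\<in>U n. T m j * G n j n)" .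
    show "(\<Sum>j\<in>\<Lambda>. T m j * A j n) = Iden m n + K m n"
    proof (cases "m \<in> U n")
      case True
      have "is_inv_on (U n) T (G n)" using G n by blast
      hence "(\<Sum>j\<in>U n. T m j * G n j n) = (if m = n then 1 else 0)"
        unfolding is_inv_on_def using True nU[OF n] by blast
      thus ?thesis using e True by (simp add: K_def Iden_def)
    next
      case False
      have mn: "m \<noteq> n" using False nU[OF n] by blast
      have "(\<Sum>j\<in>U n. T m j * G n j n) = (\<Sum>j\<in>U n. R m j * G n j n)"
      proof (rule sum.cong[OF refl])
        fix j assume j: "j \<in> U n"
        have jL: "j \<in> \<Lambda>" using j Usub[OF n] by blast
        have "m \<noteq> j" using j False by blast
        hence "D m j = 0" using assms(5) m jL by blast
        thus "T m j * G n j n = R m j * G n j n" using assms(4) m jL by simp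
      qed
      thus ?thesis using e False mn by (simp add: K_def Iden_def)
    qed
  qed
  have Kb: "mnorm \<sigma>' \<Lambda> K \<le> 1/2"
  proof (rule mnorm_le[OF fin False])
    fix n assume n: "n \<in> \<Lambda>"
    from par[OF n] have ln: "l n > 0" and mu0: "0 \<le> \<mu> n" and mus: "\<mu> n \<le> \<sigma> - \<sigma>'" and cn: "Cn n > 0"
      by auto
    define E where "E = exp (- \<mu> n * l n powr cexp)"
    have E0: "0 \<le> E" unfolding E_def by simp
    have Rn: "0 \<le> mnorm \<sigma> \<Lambda> R" by (rule mnorm_nonneg[OF fin s0])
    have wkey: "wt \<sigma>' (m - n) \<le> E * (wt \<sigma> (m - j) * wt (\<sigma>' + \<mu> n) (j - n))"
      if m: "m \<in> \<Lambda> - U n" for m j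
    proof -
      have "l n \<le> maxnorm (n - m)" using assms(9) n m by blast
      hence lm: "l n \<le> maxnorm (m - n)" by (simp add: mn_sym)
      define p where "p = maxnorm (m - n) powr cexp"
      have lp: "l n powr cexp \<le> p" unfolding p_def using lm ln by (intro powr_mono2) (auto simp: cexp_def)
      have "exp (\<sigma>' * p) = exp (- \<mu> n * p) * exp ((\<sigma>' + \<mu> n) * p)"
        by (simp add: exp_add[symmetric] algebra_simps)
      also have "\<dots> \<le> E * exp ((\<sigma>' + \<mu> n) * p)"
        unfolding E_def using lp mu0 by (intro mult_right_mono) (auto intro: mult_left_mono)
      finally have ep: "exp (\<sigma>' * p) \<le> E * exp ((\<sigma>' + \<mu> n) * p)" .
      have "wt \<sigma>' (m - n) = D_N TYPE('n) * exp (\<sigma>' * p)" unfolding wt_def p_def by simp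
      also have "\<dots> \<le> D_N TYPE('n) * (E * exp ((\<sigma>' + \<mu> n) * p))"
        using ep DN_ge1[where 'n='n] by (intro mult_left_mono) auto
      also have "\<dots> = E * wt (\<sigma>' + \<mu> n) (m - n)" unfolding wt_def p_def by simp
      also have "\<dots> \<le> E * (wt \<sigma> (m - j) * wt (\<sigma>' + \<mu> n) (j - n))"
        using E0 s'0 mu0 mus by (intro mult_left_mono wt_sub) auto
      finally show ?thesis .
    qed
    have "colsum \<sigma>' \<Lambda> K n \<le> (\<Sum>m\<in>\<Lambda>. \<Sum>j\<in>U n. E * (wt \<sigma> (m - j) * wt (\<sigma>' + \<mu> n) (j - n)) * (cmod (R m j) * cmod (G n j n)))"
      unfolding colsum_def
    proof (rule sum_mono)
      fix m assume m: "m \<in> \<Lambda>"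
      show "wt \<sigma>' (m - n) * cmod (K m n) \<le> (\<Sum>j\<in>U n. E * (wt \<sigma> (m - j) * wt (\<sigma>' + \<mu> n) (j - n)) * (cmod (R m j) * cmod (G n j n)))"
      proof (cases "m \<in> U n")
        case True
        thus ?thesis using E0 s0 s'0 mu0
          by (auto simp: K_def intro!: sum_nonneg mult_nonneg_nonneg wt_nonneg)
      next
        case False
        have "wt \<sigma>' (m - n) * cmod (K m n) \<le> wt \<sigma>' (m - n) * (\<Sum>j\<in>U n. cmod (R m j) * cmod (G n j n))"
          unfolding K_def using False wt_nonneg[OF s'0]
          by (auto intro!: mult_left_mono order_trans[OF norm_sum] simp: norm_mult)
        also have "\<dots> = (\<Sum>j\<in>U n. wt \<sigma>' (m - n) * (cmod (R m j) * cmod (G n j n)))"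
          by (simp add: sum_distrib_left)
        also have "\<dots> \<le> (\<Sum>j\<in>U n. E * (wt \<sigma> (m - j) * wt (\<sigma>' + \<mu> n) (j - n)) * (cmod (R m j) * cmod (G n j n)))"
          using False m by (intro sum_mono mult_right_mono wkey) auto
        finally show ?thesis .
      qed
    qed
    also have "\<dots> = E * (\<Sum>j\<in>U n. wt (\<sigma>' + \<mu> n) (j - n) * cmod (G n j n) * colsum \<sigma> \<Lambda> R j)"
      unfolding colsum_def
      by (subst sum.swap) (simp add: sum_distrib_left sum_distrib_right algebra_simps)
    also have "\<dots> \<le> E * (\<Sum>j\<in>U n. wt (\<sigma>' + \<mu> n) (j - n) * cmod (G n j n) * mnorm \<sigma> \<Lambda> R)"
      using E0 s'0 mu0 Usub[OF n]
      by (intro mult_left_mono sum_mono mult_left_mono mnorm_ge[OF fin] mult_nonneg_nonneg wt_nonneg) auto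
    also have "\<dots> = E * (colsum (\<sigma>' + \<mu> n) (U n) (G n) n * mnorm \<sigma> \<Lambda> R)"
      unfolding colsum_def by (simp add: sum_distrib_right)
    also have "\<dots> \<le> E * (Cn n * mnorm \<sigma> \<Lambda> R)"
    proof -
      have "colsum (\<sigma>' + \<mu> n) (U n) (G n) n \<le> mnorm (\<sigma>' + \<mu> n) (U n) (G n)"
        by (rule mnorm_ge[OF finU[OF n] nU[OF n]])
      also have "\<dots> \<le> Cn n" using G n by blast
      finally show ?thesis using E0 Rn by (intro mult_left_mono mult_right_mono) auto
    qed
    also have "\<dots> = Cn n * exp (- \<mu> n * l n powr cexp) * mnorm \<sigma> \<Lambda> R" unfolding E_def by simp
    also have "\<dots> \<le> 1/2" using assms(10) n by blast
    finally show "colsum \<sigma>' \<Lambda> K n \<le> 1/2" .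
  qed
  have Kcol: "(\<Sum>m\<in>\<Lambda>. cmod (K m j)) \<le> 1/2" if j: "j \<in> \<Lambda>" for j
  proof -
    have "(\<Sum>m\<in>\<Lambda>. cmod (K m j)) \<le> colsum \<sigma>' \<Lambda> K j"
      unfolding colsum_def
    proof (rule sum_mono)
      fix m show "cmod (K m j) \<le> wt \<sigma>' (m - j) * cmod (K m j)"
        using wt_ge1[OF s'0, of "m - j"] by (simp add: mult_le_cancel_right1)
    qed
    also have "\<dots> \<le> mnorm \<sigma>' \<Lambda> K" by (rule mnorm_ge[OF fin j])
    finally show ?thesis using Kb by simp
  qed
  have inj: "\<forall>j\<in>\<Lambda>. v j = 0" if hv: "\<forall>m\<in>\<Lambda>. (\<Sum>j\<in>\<Lambda>. (Iden m j + K m j) * v j) = 0" for v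
  proof -
    have vm: "v m = - (\<Sum>j\<in>\<Lambda>. K m j * v j)" if m: "m \<in> \<Lambda>" for m
    proof -
      have "(\<Sum>j\<in>\<Lambda>. (Iden m j + K m j) * v j) = (\<Sum>j\<in>\<Lambda>. Iden m j * v j) + (\<Sum>j\<in>\<Lambda>. K m j * v j)"
        by (simp add: distrib_right sum.distrib)
      also have "(\<Sum>j\<in>\<Lambda>. Iden m j * v j) = v m"
      proof -
        have "(\<Sum>j\<in>\<Lambda>. Iden m j * v j) = (\<Sum>j\<in>\<Lambda>. if j = m then v j else 0)"
          by (intro sum.cong) (auto simp: Iden_def)
        thus ?thesis using fin m by (simp add: sum.delta)
      qed
      finally show ?thesis using hv m by (simp add: eq_neg_iff_add_eq_0)
    qed
    define tot where "tot = (\<Sum>m\<in>\<Lambda>. cmod (v m))"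
    have "tot \<le> (\<Sum>m\<in>\<Lambda>. \<Sum>j\<in>\<Lambda>. cmod (K m j) * cmod (v j))"
      unfolding tot_def
    proof (rule sum_mono)
      fix m assume m: "m \<in> \<Lambda>"
      have "cmod (v m) = cmod (\<Sum>j\<in>\<Lambda>. K m j * v j)" using vm[OF m] by simp
      also have "\<dots> \<le> (\<Sum>j\<in>\<Lambda>. cmod (K m j) * cmod (v j))"
        by (rule order_trans[OF norm_sum]) (simp add: norm_mult)
      finally show "cmod (v m) \<le> (\<Sum>j\<in>\<Lambda>. cmod (K m j) * cmod (v j))" .
    qed
    also have "\<dots> = (\<Sum>j\<in>\<Lambda>. cmod (v j) * (\<Sum>m\<in>\<Lambda>. cmod (K m j)))"
      by (subst sum.swap) (simp add: sum_distrib_left mult.commute)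
    also have "\<dots> \<le> (\<Sum>j\<in>\<Lambda>. cmod (v j) * (1/2))"
      by (intro sum_mono mult_left_mono Kcol) auto
    also have "\<dots> = tot / 2" unfolding tot_def by (simp add: sum_divide_distrib)
    finally have "tot \<le> 0" by simp
    moreover have "0 \<le> tot" unfolding tot_def by (simp add: sum_nonneg)
    ultimately have "tot = 0" by simp
    hence "\<forall>j\<in>\<Lambda>. cmod (v j) = 0" unfolding tot_def using fin
      by (subst (asm) sum_nonneg_eq_0_iff) auto
    thus ?thesis by simp
  qed
  obtain M where M: "\<forall>m\<in>\<Lambda>. \<forall>k\<in>\<Lambda>. (\<Sum>j\<in>\<Lambda>. (Iden m j + K m j) * M j k) = (if m = k then 1 else 0)"
    using LA_inj_inv[OF fin, of "\<lambda>m j. Iden m j + K m j"] inj by blast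
  define N where "N m k = M m k - Iden m k" for m k
  have Neq: "\<forall>m\<in>\<Lambda>. \<forall>k\<in>\<Lambda>. N m k = - K m k + - (\<Sum>j\<in>\<Lambda>. K m j * N j k)"
  proof (intro ballI)
    fix m k assume m: "m \<in> \<Lambda>" and k: "k \<in> \<Lambda>"
    have "(\<Sum>j\<in>\<Lambda>. (Iden m j + K m j) * M j k) = (\<Sum>j\<in>\<Lambda>. Iden m j * M j k) + (\<Sum>j\<in>\<Lambda>. K m j * M j k)"
      by (simp add: distrib_right sum.distrib)
    also have "(\<Sum>j\<in>\<Lambda>. Iden m j * M j k) = M m k"
    proof -
      have "(\<Sum>j\<in>\<Lambda>. Iden m j * M j k) = (\<Sum>j\<in>\<Lambda>. if j = m then M j k else 0)"
        by (intro sum.cong) (auto simp: Iden_def)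
      thus ?thesis using fin m by (simp add: sum.delta)
    qed
    also have "(\<Sum>j\<in>\<Lambda>. K m j * M j k) = (\<Sum>j\<in>\<Lambda>. K m j * Iden j k) + (\<Sum>j\<in>\<Lambda>. K m j * N j k)"
      by (simp add: N_def distrib_left sum.distrib[symmetric] algebra_simps)
    also have "(\<Sum>j\<in>\<Lambda>. K m j * Iden j k) = K m k"
    proof -
      have "(\<Sum>j\<in>\<Lambda>. K m j * Iden j k) = (\<Sum>j\<in>\<Lambda>. if j = k then K m j else 0)"
        by (intro sum.cong) (auto simp: Iden_def)
      thus ?thesis using fin k by (simp add: sum.delta)
    qed
    finally have "M m k + (K m k + (\<Sum>j\<in>\<Lambda>. K m j * N j k)) = Iden m k"
      using M m k by (simp add: Iden_def)
    thus "N m k = - K m k + - (\<Sum>j\<in>\<Lambda>. K m j * N j k)"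
      unfolding N_def by (simp add: algebra_simps)
  qed
  have Nb: "mnorm \<sigma>' \<Lambda> N \<le> 1"
  proof -
    have "mnorm \<sigma>' \<Lambda> N = mnorm \<sigma>' \<Lambda> (\<lambda>m k. - K m k + - (\<Sum>j\<in>\<Lambda>. K m j * N j k))"
      by (rule mnorm_cong[OF Neq])
    also have "\<dots> \<le> mnorm \<sigma>' \<Lambda> (\<lambda>m k. - K m k) + mnorm \<sigma>' \<Lambda> (\<lambda>m k. - (\<Sum>j\<in>\<Lambda>. K m j * N j k))"
      by (rule mnorm_add[OF fin s'0])
    also have "\<dots> = mnorm \<sigma>' \<Lambda> K + mnorm \<sigma>' \<Lambda> (\<lambda>m k. \<Sum>j\<in>\<Lambda>. K m j * N j k)"
      by (simp add: mnorm_uminus)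
    also have "\<dots> \<le> 1/2 + mnorm \<sigma>' \<Lambda> K * mnorm \<sigma>' \<Lambda> N"
      using Kb mnorm_mult[OF fin s'0 order_refl, of K N] by linarith
    also have "\<dots> \<le> 1/2 + 1/2 * mnorm \<sigma>' \<Lambda> N"
      using Kb mnorm_nonneg[OF fin s'0, of N] by (intro add_left_mono mult_right_mono) auto
    finally show ?thesis by simp
  qed
  have Mb: "mnorm \<sigma>' \<Lambda> M \<le> wt \<sigma>' (0::int^'n) + 1"
  proof -
    have "mnorm \<sigma>' \<Lambda> M = mnorm \<sigma>' \<Lambda> (\<lambda>m k. Iden m k + N m k)"
      by (rule mnorm_cong) (simp add: N_def)
    also have "\<dots> \<le> mnorm \<sigma>' \<Lambda> Iden + mnorm \<sigma>' \<Lambda> N" by (rule mnorm_add[OF fin s'0])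
    also have "mnorm \<sigma>' \<Lambda> Iden \<le> wt \<sigma>' (0::int^'n)" unfolding Iden_def by (rule mnorm_id[OF fin])
    finally show ?thesis using Nb by simp
  qed
  have Ab: "mnorm \<sigma>' \<Lambda> A \<le> Cmax"
  proof (rule mnorm_le[OF fin False])
    fix n assume n: "n \<in> \<Lambda>"
    from par[OF n] have mu0: "0 \<le> \<mu> n" by auto
    have "colsum \<sigma>' \<Lambda> A n = (\<Sum>m\<in>\<Lambda>. if m \<in> U n then wt \<sigma>' (m - n) * cmod (G n m n) else 0)"
      unfolding colsum_def by (intro sum.cong) (auto simp: A_def)
    also have "\<dots> = (\<Sum>m\<in>U n. wt \<sigma>' (m - n) * cmod (G n m n))" by (rule sum_restrict_sub[OF fin Usub[OF n]])
    also have "\<dots> \<le> (\<Sum>m\<in>U n. wt (\<sigma>' + \<mu> n) (m - n) * cmod (G n m n))"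
      using mu0 by (intro sum_mono mult_right_mono wt_mono) auto
    also have "\<dots> = colsum (\<sigma>' + \<mu> n) (U n) (G n) n" unfolding colsum_def by simp
    also have "\<dots> \<le> mnorm (\<sigma>' + \<mu> n) (U n) (G n)" by (rule mnorm_ge[OF finU[OF n] nU[OF n]])
    also have "\<dots> \<le> Cn n" using G n by blast
    also have "\<dots> \<le> Cmax" by (rule CnC[OF n])
    finally show "colsum \<sigma>' \<Lambda> A n \<le> Cmax" .
  qed
  define B where "B m k = (\<Sum>j\<in>\<Lambda>. A m j * M j k)" for m k
  have TB: "\<forall>m\<in>\<Lambda>. \<forall>k\<in>\<Lambda>. (\<Sum>j\<in>\<Lambda>. T m j * B j k) = (if m = k then 1 else 0)"
  proof (intro ballI)
    fix m k assume m: "m \<in> \<Lambda>" and k: "k \<in> \<Lambda>"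
    have "(\<Sum>j\<in>\<Lambda>. T m j * B j k) = (\<Sum>i\<in>\<Lambda>. (\<Sum>j\<in>\<Lambda>. T m j * A j i) * M i k)"
      unfolding B_def by (simp add: sum_distrib_left sum_distrib_right mult.assoc) (rule sum.swap)
    also have "\<dots> = (\<Sum>i\<in>\<Lambda>. (Iden m i + K m i) * M i k)"
      using TA m by (intro sum.cong) auto
    also have "\<dots> = (if m = k then 1 else 0)" using M m k by blast
    finally show "(\<Sum>j\<in>\<Lambda>. T m j * B j k) = (if m = k then 1 else 0)" .
  qed
  have BT: "\<forall>m\<in>\<Lambda>. \<forall>k\<in>\<Lambda>. (\<Sum>j\<in>\<Lambda>. B m j * T j k) = (if m = k then 1 else 0)"
    by (rule LA_right_left[OF fin TB])
  have Cpos: "0 \<le> Cmax"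
  proof -
    obtain n where n: "n \<in> \<Lambda>" using False by blast
    thus ?thesis using par[OF n] CnC[OF n] by linarith
  qed
  have "mnorm \<sigma>' \<Lambda> B \<le> mnorm \<sigma>' \<Lambda> A * mnorm \<sigma>' \<Lambda> M"
    unfolding B_def by (rule mnorm_mult[OF fin s'0 order_refl])
  also have "\<dots> \<le> Cmax * (wt \<sigma>' (0::int^'n) + 1)"
    using Ab Mb Cpos mnorm_nonneg[OF fin s'0, of M] by (intro mult_mono) auto
  finally have "mnorm \<sigma>' \<Lambda> B \<le> (1 + wt \<sigma>' (0::int^'n)) * (if \<Lambda> = {} then 0 else Max (Cn ` \<Lambda>))"
    using False by (simp add: Cmax_def algebra_simps)
  moreover have "is_inv_on \<Lambda> T B" unfolding is_inv_on_def using TB BT by blast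
  ultimately show ?thesis by blast
qed

end
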